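(* Let $m\ge1$, $n\ge1$, $N>2n$. Let $\mathbf M_N$ be a symmetric positive definite $mN\times mN$ block-circulant matrix which is banded of bandwidth $n$, and let $\mathbf e=\{\mathbf e(t)\}_{t=1}^N$ be a stationary process on $\mathbb Z_N$ with covariance matrix $\mathbb E\,\mathbf e\mathbf e^\top=\mathbf M_N$. Then there is a unique process $\mathbf y$ solving $\mathbf M_N\mathbf y=\mathbf e$; it is a full rank stationary reciprocal process of order $n$ on $\mathbb Z_N$, it satisfies $\mathbb E\,\mathbf y\mathbf e^\top=I_{mN}$, and $\mathbf e$ is its normalized conjugate process, i.e. $\mathbf e(t)=\Delta^{-1}\mathbf d(t)$ where $\mathbf d(t)=\mathbf y(t)-\hat{\mathbb E}[\mathbf y(t)\mid\mathbf y(s),s\ne t]$ and $\Delta=\mathbb E\,\mathbf d(t)\mathbf d(t)^\top$.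
   Context: Processes are stacked as vectors in $\mathbb R^{mN}$, $\mathbf y=(\mathbf y(1)^\top,\dots,\mathbf y(N)^\top)^\top$. A matrix with $N\times N$ blocks of size $m\times m$ is block-circulant if its $(i,j)$ block depends only on $(i-j)\bmod N$, and banded of bandwidth $n$ if moreover its $(i,j)$ block is zero whenever $\min\{(i-j)\bmod N,(j-i)\bmod N\}>n$. A process on $\mathbb Z_N$ is a zero-mean second-order $\mathbb R^m$-valued process indexed by $t=1,\dots,N$ (indices mod $N$) whose covariance is symmetric block-circulant (it is then called stationary); full rank means positive definite covariance. $\hat{\mathbb E}[\cdot\mid\cdot]$ is orthogonal projection onto the closed linear span of the scalar components of the conditioning variables. Subspaces $\mathcal A,\mathcal B$ are conditionally orthogonal given $\mathcal C$ if $a-\hat{\mathbb E}[a\mid\mathcal C]$ and $b-\hat{\mathbb E}[b\mid\mathcal C]$ are uncorrelated for all $a\in\mathcal A,b\in\mathcal B$. The process is reciprocal of order $n$ if for every cyclic interval $(t_1,t_2)$ the variables $\{\mathbf y(t):t\in(t_1,t_2)\}$ are conditionally orthogonal to $\{\mathbf y(s):s\notin(t_1,t_2)\}$ given $\mathbf y(t_1-n+1),\dots,\mathbf y(t_1),\mathbf y(t_2),\dots,\mathbf y(t_2+n-1)$. *)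

theory Defs
  imports "HOL-Analysis.Analysis"
begin

text \<open>
  Zero-mean second-order scalar random variables are modelled as elements of a
  real inner product space 'h (an abstract L2 space), with covariance E[a b] = inner a b.
  Time indices of Z_N are 0..N-1 (the paper's 1..N shifted, arithmetic mod N); components are
  0..m-1.  An R^m-valued process on Z_N is a map x :: nat => nat => 'h, x t i being the i-th
  scalar component of x(t).
\<close>

definition stack :: "nat \<Rightarrow> (nat \<Rightarrow> nat \<Rightarrow> 'h) \<Rightarrow> nat \<Rightarrow> 'h" where
  "stack m x k = x (k div m) (k mod m)"

definition cross_cov :: "nat \<Rightarrow> (nat \<Rightarrow> nat \<Rightarrow> 'h::real_inner) \<Rightarrow> (nat \<Rightarrow> nat \<Rightarrow> 'h) \<Rightarrow> nat \<Rightarrow> nat \<Rightarrow> real" where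
  "cross_cov m x z k l = inner (stack m x k) (stack m z l)"

definition cov :: "nat \<Rightarrow> (nat \<Rightarrow> nat \<Rightarrow> 'h::real_inner) \<Rightarrow> nat \<Rightarrow> nat \<Rightarrow> real" where
  "cov m x = cross_cov m x x"

definition symmetric_mat :: "nat \<Rightarrow> (nat \<Rightarrow> nat \<Rightarrow> real) \<Rightarrow> bool" where
  "symmetric_mat d A \<longleftrightarrow> (\<forall>k<d. \<forall>l<d. A k l = A l k)"

definition pos_def_mat :: "nat \<Rightarrow> (nat \<Rightarrow> nat \<Rightarrow> real) \<Rightarrow> bool" where
  "pos_def_mat d A \<longleftrightarrow>
     (\<forall>x::nat \<Rightarrow> real. (\<exists>k<d. x k \<noteq> 0) \<longrightarrow> (\<Sum>k<d. \<Sum>l<d. x k * A k l * x l) > 0)"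

definition block_circulant :: "nat \<Rightarrow> nat \<Rightarrow> (nat \<Rightarrow> nat \<Rightarrow> real) \<Rightarrow> bool" where
  "block_circulant m N A \<longleftrightarrow>
     (\<forall>i<N. \<forall>j<N. \<forall>i'<N. \<forall>j'<N. (i + N - j) mod N = (i' + N - j') mod N \<longrightarrow>
        (\<forall>a<m. \<forall>b<m. A (i*m + a) (j*m + b) = A (i'*m + a) (j'*m + b)))"

definition banded :: "nat \<Rightarrow> nat \<Rightarrow> nat \<Rightarrow> (nat \<Rightarrow> nat \<Rightarrow> real) \<Rightarrow> bool" where
  "banded m N n A \<longleftrightarrow> block_circulant m N A \<and>
     (\<forall>i<N. \<forall>j<N. min ((i + N - j) mod N) ((j + N - i) mod N) > n \<longrightarrow>
        (\<forall>a<m. \<forall>b<m. A (i*m + a) (j*m + b) = 0))"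

definition stationary :: "nat \<Rightarrow> nat \<Rightarrow> (nat \<Rightarrow> nat \<Rightarrow> 'h::real_inner) \<Rightarrow> bool" where
  "stationary m N x \<longleftrightarrow> symmetric_mat (m*N) (cov m x) \<and> block_circulant m N (cov m x)"

definition full_rank :: "nat \<Rightarrow> nat \<Rightarrow> (nat \<Rightarrow> nat \<Rightarrow> 'h::real_inner) \<Rightarrow> bool" where
  "full_rank m N x \<longleftrightarrow> pos_def_mat (m*N) (cov m x)"

definition hatE :: "'h::real_inner \<Rightarrow> 'h set \<Rightarrow> 'h" where
  "hatE a S = (THE p. p \<in> closure (span S) \<and> (\<forall>b\<in>closure (span S). inner (a - p) b = 0))"

definition cond_orth :: "'h::real_inner set \<Rightarrow> 'h set \<Rightarrow> 'h set \<Rightarrow> bool" where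
  "cond_orth A B C \<longleftrightarrow>
     (\<forall>a\<in>closure (span A). \<forall>b\<in>closure (span B). inner (a - hatE a C) (b - hatE b C) = 0)"

definition comps :: "nat \<Rightarrow> (nat \<Rightarrow> nat \<Rightarrow> 'h) \<Rightarrow> nat set \<Rightarrow> 'h set" where
  "comps m x T = {x t i | t i. t \<in> T \<and> i < m}"

definition cyc_interval :: "nat \<Rightarrow> nat \<Rightarrow> nat \<Rightarrow> nat set" where
  "cyc_interval N t1 t2 = {(t1 + k) mod N | k. 0 < k \<and> k < (t2 + N - t1) mod N}"

text \<open>Boundary y(t1-n+1),...,y(t1), y(t2),...,y(t2+n-1).\<close>
definition cyc_boundary :: "nat \<Rightarrow> nat \<Rightarrow> nat \<Rightarrow> nat \<Rightarrow> nat set" where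
  "cyc_boundary N n t1 t2 =
     {(t1 + N * n - k) mod N | k. k < n} \<union> {(t2 + k) mod N | k. k < n}"

definition reciprocal :: "nat \<Rightarrow> nat \<Rightarrow> nat \<Rightarrow> (nat \<Rightarrow> nat \<Rightarrow> 'h::real_inner) \<Rightarrow> bool" where
  "reciprocal m N n x \<longleftrightarrow>
     (\<forall>t1<N. \<forall>t2<N.
        cond_orth (comps m x (cyc_interval N t1 t2))
                  (comps m x ({..<N} - cyc_interval N t1 t2))
                  (comps m x (cyc_boundary N n t1 t2)))"

definition solves :: "nat \<Rightarrow> nat \<Rightarrow> (nat \<Rightarrow> nat \<Rightarrow> real) \<Rightarrow> (nat \<Rightarrow> nat \<Rightarrow> 'h::real_vector)
                       \<Rightarrow> (nat \<Rightarrow> nat \<Rightarrow> 'h) \<Rightarrow> bool" where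
  "solves m N M y e \<longleftrightarrow> (\<forall>k<m*N. (\<Sum>l<m*N. M k l *\<^sub>R stack m y l) = stack m e k)"

definition conj_d :: "nat \<Rightarrow> nat \<Rightarrow> (nat \<Rightarrow> nat \<Rightarrow> 'h::real_inner) \<Rightarrow> nat \<Rightarrow> nat \<Rightarrow> 'h" where
  "conj_d m N y t i = y t i - hatE (y t i) (comps m y ({..<N} - {t}))"

definition inverse_pair :: "nat \<Rightarrow> (nat \<Rightarrow> nat \<Rightarrow> real) \<Rightarrow> (nat \<Rightarrow> nat \<Rightarrow> real) \<Rightarrow> bool" where
  "inverse_pair d A B \<longleftrightarrow>
     (\<forall>i<d. \<forall>j<d. (\<Sum>k<d. A i k * B k j) = (if i = j then 1 else 0)
                 \<and> (\<Sum>k<d. B i k * A k j) = (if i = j then 1 else 0))"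

definition normalized_conjugate :: "nat \<Rightarrow> nat \<Rightarrow> (nat \<Rightarrow> nat \<Rightarrow> 'h::real_inner)
                                    \<Rightarrow> (nat \<Rightarrow> nat \<Rightarrow> 'h) \<Rightarrow> bool" where
  "normalized_conjugate m N y e \<longleftrightarrow>
     (\<exists>Delta Dinv. inverse_pair m Delta Dinv \<and>
        (\<forall>t<N. (\<forall>i<m. \<forall>j<m. Delta i j = inner (conj_d m N y t i) (conj_d m N y t j)) \<and>
               (\<forall>i<m. e t i = (\<Sum>j<m. Dinv i j *\<^sub>R conj_d m N y t j))))"

end

theory Submission
  imports Defs "Jordan_Normal_Form.Determinant"
begin



lemma inj_inverse:
  fixes A :: "nat \<Rightarrow> nat \<Rightarrow> real"
  assumes inj: "\<And>x. (\<forall>i<d. (\<Sum>l<d. A i l * x l) = 0) \<Longrightarrow> (\<forall>l<d. x l = 0)"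
  shows "\<exists>B. inverse_pair d A B"
proof -
  define A' where "A' = mat d d (\<lambda>(i,j). A i j)"
  have A'c: "A' \<in> carrier_mat d d" unfolding A'_def by simp
  have "det A' \<noteq> 0"
  proof
    assume "det A' = 0"
    then obtain v where v: "v \<in> carrier_vec d" "v \<noteq> 0\<^sub>v d" "A' *\<^sub>v v = 0\<^sub>v d"
      using det_0_iff_vec_prod_zero_field[OF A'c] by auto
    define x where "x = (\<lambda>l. v $ l)"
    have "\<forall>i<d. (\<Sum>l<d. A i l * x l) = 0"
    proof (intro allI impI)
      fix i assume i: "i < d"
      have "(A' *\<^sub>v v) $ i = 0" using v(3) i by simp
      thus "(\<Sum>l<d. A i l * x l) = 0" using i v(1)
        unfolding A'_def x_def by (simp add: scalar_prod_def row_def atLeast0LessThan)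
    qed
    hence "\<forall>l<d. x l = 0" by (rule inj)
    hence "v = 0\<^sub>v d" using v(1) unfolding x_def by (intro eq_vecI) auto
    with v(2) show False by simp
  qed
  from det_non_zero_imp_unit[OF A'c this, of "()"]
  obtain B' where B': "B' \<in> carrier_mat d d" "B' * A' = 1\<^sub>m d" "A' * B' = 1\<^sub>m d"
    unfolding Units_def ring_mat_def by auto
  define B where "B = (\<lambda>i j. B' $$ (i,j))"
  have "inverse_pair d A B"
    unfolding inverse_pair_def
  proof (intro allI impI conjI)
    fix i j assume i: "i < d" and j: "j < d"
    have "(A' * B') $$ (i,j) = (if i = j then 1 else 0)" using B' i j by simp
    thus "(\<Sum>k<d. A i k * B k j) = (if i = j then 1 else 0)"
      using i j B'(1) unfolding A'_def B_def by (simp add: scalar_prod_def row_def col_def atLeast0LessThan)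
    have "(B' * A') $$ (i,j) = (if i = j then 1 else 0)" using B' i j by simp
    thus "(\<Sum>k<d. B i k * A k j) = (if i = j then 1 else 0)"
      using i j B'(1) unfolding A'_def B_def by (simp add: scalar_prod_def row_def col_def atLeast0LessThan)
  qed
  thus ?thesis by blast
qed
lemma pd_inverse_on:
  fixes A :: "nat \<Rightarrow> nat \<Rightarrow> real"
  assumes fin: "finite U"
    and pd: "\<forall>x. (\<exists>k\<in>U. x k \<noteq> 0) \<longrightarrow> (\<Sum>k\<in>U. \<Sum>l\<in>U. x k * A k l * x l) > 0"
  shows "\<exists>G. \<forall>i\<in>U. \<forall>j\<in>U. (\<Sum>k\<in>U. A i k * G k j) = (if i = j then 1 else 0)
                          \<and> (\<Sum>k\<in>U. G i k * A k j) = (if i = j then 1 else 0)"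
proof -
  define n where "n = card U"
  obtain h where h: "bij_betw h {..<n} U"
    using ex_bij_betw_nat_finite[OF fin] unfolding n_def atLeast0LessThan by blast
  define g where "g = the_inv_into {..<n} h"
  have g: "bij_betw g U {..<n}" unfolding g_def by (rule bij_betw_the_inv_into[OF h])
  have hg: "h (g k) = k" if "k \<in> U" for k
    unfolding g_def using f_the_inv_into_f_bij_betw[OF h] that by blast
  have gh: "g (h i) = i" if "i < n" for i
    unfolding g_def using the_inv_into_f_f[of h "{..<n}" i] h that by (auto simp: bij_betw_def)
  have hU: "h i \<in> U" if "i < n" for i using h that by (auto simp: bij_betw_def)
  have gU: "g k < n" if "k \<in> U" for k using g that by (auto simp: bij_betw_def)
  define A' where "A' = (\<lambda>i j. A (h i) (h j))"
  have "\<exists>B. inverse_pair n A' B"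
  proof (rule inj_inverse)
    fix x assume x: "\<forall>i<n. (\<Sum>l<n. A' i l * x l) = 0"
    define x' where "x' = (\<lambda>k. x (g k))"
    have "(\<Sum>k\<in>U. \<Sum>l\<in>U. x' k * A k l * x' l) = (\<Sum>i<n. \<Sum>l\<in>U. x' (h i) * A (h i) l * x' l)"
      by (rule sum.reindex_bij_betw[OF h, symmetric])
    also have "\<dots> = (\<Sum>i<n. \<Sum>j<n. x' (h i) * A (h i) (h j) * x' (h j))"
      by (rule sum.cong[OF refl], rule sum.reindex_bij_betw[OF h, symmetric])
    also have "\<dots> = (\<Sum>i<n. x i * (\<Sum>j<n. A' i j * x j))"
      unfolding x'_def A'_def by (intro sum.cong refl) (simp add: gh sum_distrib_left mult.assoc)
    also have "\<dots> = 0" using x by simp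
    finally have sum0: "(\<Sum>k\<in>U. \<Sum>l\<in>U. x' k * A k l * x' l) = 0" .
    have nz: "\<not> (\<exists>k\<in>U. x' k \<noteq> 0)"
    proof
      assume "\<exists>k\<in>U. x' k \<noteq> 0"
      hence "(\<Sum>k\<in>U. \<Sum>l\<in>U. x' k * A k l * x' l) > 0" using pd by blast
      thus False using sum0 by simp
    qed
    show "\<forall>l<n. x l = 0"
    proof (intro allI impI)
      fix l assume l: "l < n"
      have "x' (h l) = 0" using nz hU[OF l] by blast
      thus "x l = 0" unfolding x'_def using gh[OF l] by simp
    qed
  qed
  then obtain B where B: "inverse_pair n A' B" by blast
  define G where "G = (\<lambda>k l. B (g k) (g l))"
  have "\<forall>i\<in>U. \<forall>j\<in>U. (\<Sum>k\<in>U. A i k * G k j) = (if i = j then 1 else 0)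
                          \<and> (\<Sum>k\<in>U. G i k * A k j) = (if i = j then 1 else 0)"
  proof (intro ballI conjI)
    fix i j assume i: "i \<in> U" and j: "j \<in> U"
    have ij: "(g i = g j) = (i = j)" using hg[OF i] hg[OF j] by metis
    have "(\<Sum>k\<in>U. A i k * G k j) = (\<Sum>k<n. A i (h k) * G (h k) j)"
      by (rule sum.reindex_bij_betw[OF h, symmetric])
    also have "\<dots> = (\<Sum>k<n. A' (g i) k * B k (g j))"
      unfolding A'_def G_def using hg[OF i] gh by (intro sum.cong refl) auto
    also have "\<dots> = (if i = j then 1 else 0)" using B gU[OF i] gU[OF j] ij
      unfolding inverse_pair_def by auto
    finally show "(\<Sum>k\<in>U. A i k * G k j) = (if i = j then 1 else 0)" .
    have "(\<Sum>k\<in>U. G i k * A k j) = (\<Sum>k<n. G i (h k) * A (h k) j)"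
      by (rule sum.reindex_bij_betw[OF h, symmetric])
    also have "\<dots> = (\<Sum>k<n. B (g i) k * A' k (g j))"
      unfolding A'_def G_def using hg[OF j] gh by (intro sum.cong refl) auto
    also have "\<dots> = (if i = j then 1 else 0)" using B gU[OF i] gU[OF j] ij
      unfolding inverse_pair_def by auto
    finally show "(\<Sum>k\<in>U. G i k * A k j) = (if i = j then 1 else 0)" .
  qed
  thus ?thesis by blast
qed

lemma pd_inverse:
  fixes A :: "nat \<Rightarrow> nat \<Rightarrow> real"
  assumes "pos_def_mat d A"
  shows "\<exists>B. inverse_pair d A B"
proof -
  have "\<exists>G. \<forall>i\<in>{..<d}. \<forall>j\<in>{..<d}. (\<Sum>k\<in>{..<d}. A i k * G k j) = (if i = j then 1 else 0)
                          \<and> (\<Sum>k\<in>{..<d}. G i k * A k j) = (if i = j then 1 else 0)"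
    by (rule pd_inverse_on) (use assms in \<open>auto simp: pos_def_mat_def\<close>)
  then obtain G where G: "\<forall>i\<in>{..<d}. \<forall>j\<in>{..<d}. (\<Sum>k\<in>{..<d}. A i k * G k j) = (if i = j then 1 else 0)
                          \<and> (\<Sum>k\<in>{..<d}. G i k * A k j) = (if i = j then 1 else 0)" by blast
  have "inverse_pair d A G" unfolding inverse_pair_def
  proof (intro allI impI)
    fix i j assume "i < d" "j < d"
    thus "(\<Sum>k<d. A i k * G k j) = (if i = j then 1 else 0) \<and> (\<Sum>k<d. G i k * A k j) = (if i = j then 1 else 0)"
      using G by blast
  qed
  thus ?thesis by blast
qed

lemma pd_restrict:
  fixes A :: "nat \<Rightarrow> nat \<Rightarrow> real"
  assumes "pos_def_mat d A" "U \<subseteq> {..<d}"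
  shows "\<forall>x. (\<exists>k\<in>U. x k \<noteq> 0) \<longrightarrow> (\<Sum>k\<in>U. \<Sum>l\<in>U. x k * A k l * x l) > 0"
proof (intro allI impI)
  fix x :: "nat \<Rightarrow> real" assume ex: "\<exists>k\<in>U. x k \<noteq> 0"
  define x' where "x' = (\<lambda>k. if k \<in> U then x k else 0)"
  have "\<exists>k<d. x' k \<noteq> 0" using ex assms(2) unfolding x'_def by auto
  hence "(\<Sum>k<d. \<Sum>l<d. x' k * A k l * x' l) > 0" using assms(1) unfolding pos_def_mat_def by blast
  also have "(\<Sum>k<d. \<Sum>l<d. x' k * A k l * x' l) = (\<Sum>k\<in>U. \<Sum>l\<in>U. x k * A k l * x l)"
  proof -
    have "(\<Sum>k<d. \<Sum>l<d. x' k * A k l * x' l) = (\<Sum>k\<in>U. \<Sum>l<d. x' k * A k l * x' l)"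
      unfolding x'_def using assms(2) by (intro sum.mono_neutral_right) auto
    also have "\<dots> = (\<Sum>k\<in>U. \<Sum>l\<in>U. x' k * A k l * x' l)"
      unfolding x'_def using assms(2) by (intro sum.cong refl sum.mono_neutral_right) auto
    also have "\<dots> = (\<Sum>k\<in>U. \<Sum>l\<in>U. x k * A k l * x l)"
      unfolding x'_def by simp
    finally show ?thesis .
  qed
  finally show "(\<Sum>k\<in>U. \<Sum>l\<in>U. x k * A k l * x l) > 0" .
qed



lemma orth_closure:
  fixes v :: "'h::real_inner"
  assumes "\<forall>s\<in>S. inner v s = 0" and "b \<in> closure (span S)"
  shows "inner v b = 0"
proof -
  have sub: "subspace {b. inner v b = 0}"
    unfolding subspace_def by (auto simp: inner_add_right)
  have "span S \<subseteq> {b. inner v b = 0}"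
    using assms(1) by (intro span_minimal sub) auto
  moreover have "closed {b. inner v b = 0}"
    by (intro closed_Collect_eq continuous_intros)
  ultimately have "closure (span S) \<subseteq> {b. inner v b = 0}"
    by (rule closure_minimal)
  thus ?thesis using assms(2) by auto
qed

lemma hatE_char:
  fixes a p :: "'h::real_inner"
  assumes p: "p \<in> span S" and orth: "\<forall>s\<in>S. inner (a - p) s = 0"
  shows "hatE a S = p"
  unfolding hatE_def
proof (rule the_equality)
  show "p \<in> closure (span S) \<and> (\<forall>b\<in>closure (span S). inner (a - p) b = 0)"
    using p closure_subset orth_closure[OF orth] by blast
next
  fix q assume q: "q \<in> closure (span S) \<and> (\<forall>b\<in>closure (span S). inner (a - q) b = 0)"
  have pc: "p \<in> closure (span S)" using p closure_subset by blast
  have "inner (a - q) p = 0" "inner (a - q) q = 0" using q pc by auto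
  moreover have "inner (a - p) p = 0" "inner (a - p) q = 0"
    using orth_closure[OF orth] pc q by auto
  ultimately have "inner (p - q) (p - q) = 0"
    by (simp add: inner_diff_left inner_diff_right inner_commute)
  thus "q = p" by simp
qed

lemma span_repr:
  fixes Y :: "nat \<Rightarrow> 'h::real_vector"
  assumes "finite S" and "a \<in> span (Y ` S)"
  shows "\<exists>\<alpha>. a = (\<Sum>k\<in>S. \<alpha> k *\<^sub>R Y k)"
proof -
  let ?P = "{a. \<exists>\<alpha>. a = (\<Sum>k\<in>S. \<alpha> k *\<^sub>R Y k)}"
  have sub: "subspace ?P"
    unfolding subspace_def
  proof (intro conjI ballI allI)
    show "0 \<in> ?P" by (auto intro!: exI[of _ "\<lambda>_. 0"])
  next
    fix x y assume "x \<in> ?P" "y \<in> ?P"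
    then obtain \<alpha> \<beta> where "x = (\<Sum>k\<in>S. \<alpha> k *\<^sub>R Y k)" "y = (\<Sum>k\<in>S. \<beta> k *\<^sub>R Y k)" by auto
    thus "x + y \<in> ?P" by (auto intro!: exI[of _ "\<lambda>k. \<alpha> k + \<beta> k"] simp: sum.distrib scaleR_add_left)
  next
    fix c x assume "x \<in> ?P"
    then obtain \<alpha> where "x = (\<Sum>k\<in>S. \<alpha> k *\<^sub>R Y k)" by auto
    thus "c *\<^sub>R x \<in> ?P" by (auto intro!: exI[of _ "\<lambda>k. c * \<alpha> k"] simp: scaleR_sum_right)
  qed
  have "Y ` S \<subseteq> ?P"
  proof
    fix x assume "x \<in> Y ` S"
    then obtain j where j: "j \<in> S" "x = Y j" by auto
    have "(\<Sum>k\<in>S. (if k = j then 1 else 0) *\<^sub>R Y k) = (\<Sum>k\<in>S. if k = j then Y k else 0)"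
      by (intro sum.cong) auto
    also have "\<dots> = Y j" using assms(1) j(1) by simp
    finally have "(\<Sum>k\<in>S. (if k = j then 1 else 0) *\<^sub>R Y k) = Y j" .
    thus "x \<in> ?P" using j by (auto intro!: exI[of _ "\<lambda>k. if k = j then 1 else 0"])
  qed
  hence "span (Y ` S) \<subseteq> ?P" by (intro span_minimal sub)
  thus ?thesis using assms(2) by auto
qed

lemma closure_span_biorth:
  fixes Y E :: "nat \<Rightarrow> 'h::real_inner"
  assumes fin: "finite S"
    and bi: "\<forall>j\<in>S. \<forall>k\<in>S. inner (Y j) (E k) = (if j = k then 1 else 0)"
    and a: "a \<in> closure (span (Y ` S))"
  shows "a \<in> span (Y ` S)"
proof -
  define P where "P = (\<lambda>a. \<Sum>k\<in>S. inner a (E k) *\<^sub>R Y k)"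
  have sub: "subspace {a. P a = a}"
    unfolding subspace_def P_def
  proof (intro conjI ballI allI)
    show "0 \<in> {a. (\<Sum>k\<in>S. inner a (E k) *\<^sub>R Y k) = a}" by simp
  next
    fix x y assume "x \<in> {a. (\<Sum>k\<in>S. inner a (E k) *\<^sub>R Y k) = a}" "y \<in> {a. (\<Sum>k\<in>S. inner a (E k) *\<^sub>R Y k) = a}"
    hence "(\<Sum>k\<in>S. inner x (E k) *\<^sub>R Y k) = x" "(\<Sum>k\<in>S. inner y (E k) *\<^sub>R Y k) = y" by auto
    thus "x + y \<in> {a. (\<Sum>k\<in>S. inner a (E k) *\<^sub>R Y k) = a}"
      by (simp add: inner_add_left sum.distrib scaleR_add_left)
  next
    fix c x assume "x \<in> {a. (\<Sum>k\<in>S. inner a (E k) *\<^sub>R Y k) = a}"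
    hence h: "(\<Sum>k\<in>S. inner x (E k) *\<^sub>R Y k) = x" by simp
    have "(\<Sum>k\<in>S. inner (c *\<^sub>R x) (E k) *\<^sub>R Y k) = c *\<^sub>R (\<Sum>k\<in>S. inner x (E k) *\<^sub>R Y k)"
      by (simp add: scaleR_sum_right)
    thus "c *\<^sub>R x \<in> {a. (\<Sum>k\<in>S. inner a (E k) *\<^sub>R Y k) = a}" using h by simp
  qed
  have "Y ` S \<subseteq> {a. P a = a}"
  proof
    fix x assume "x \<in> Y ` S"
    then obtain j where j: "j \<in> S" "x = Y j" by auto
    have "P (Y j) = (\<Sum>k\<in>S. (if k = j then Y k else 0))"
      unfolding P_def using bi j(1) by (intro sum.cong) auto
    also have "\<dots> = Y j" using fin j(1) by simp
    finally show "x \<in> {a. P a = a}" using j by simp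
  qed
  hence "span (Y ` S) \<subseteq> {a. P a = a}" by (intro span_minimal sub)
  moreover have "closed {a. P a = a}"
    unfolding P_def by (intro closed_Collect_eq continuous_intros)
  ultimately have "closure (span (Y ` S)) \<subseteq> {a. P a = a}" by (rule closure_minimal)
  hence "a = P a" using a by auto
  also have "P a \<in> span (Y ` S)" unfolding P_def
    by (intro span_sum span_scale span_base) auto
  finally show ?thesis .
qed

lemma residual_side:
  fixes Y E :: "nat \<Rightarrow> 'h::real_inner" and M G :: "nat \<Rightarrow> nat \<Rightarrow> real"
  assumes K: "finite K" and SK: "S \<subseteq> K" and BK: "B \<subseteq> K"
    and bi: "\<forall>j\<in>K. \<forall>k\<in>K. inner (Y j) (E k) = (if j = k then 1 else 0)"
    and Eexp: "\<forall>k\<in>K. E k = (\<Sum>l\<in>K. M k l *\<^sub>R Y l)"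
    and band: "\<forall>u\<in>S-B. \<forall>j\<in>K-(S\<union>B). M u j = 0"
    and G: "\<forall>u\<in>S-B. \<forall>j\<in>S-B. (\<Sum>l\<in>S-B. G u l * M l j) = (if u = j then 1 else 0)"
    and a: "a \<in> closure (span (Y ` S))"
  shows "a - hatE a (Y ` B) \<in> span (E ` (S - B))"
proof -
  define U where "U = S - B"
  have finS: "finite S" using K SK finite_subset by blast
  have finU: "finite U" using finS U_def by simp
  have "a \<in> span (Y ` S)"
    using closure_span_biorth[OF finS _ a, of E] bi SK by blast
  then obtain \<alpha> where \<alpha>: "a = (\<Sum>k\<in>S. \<alpha> k *\<^sub>R Y k)" using span_repr[OF finS] by blast
  define Z where "Z = (\<lambda>u. \<Sum>l\<in>U. G u l *\<^sub>R E l)"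
  have c1: "Y u - Z u \<in> span (Y ` B)" if u: "u \<in> U" for u
  proof -
    define c where "c = (\<lambda>j. \<Sum>l\<in>U. G u l * M l j)"
    have "Z u = (\<Sum>l\<in>U. G u l *\<^sub>R (\<Sum>j\<in>K. M l j *\<^sub>R Y j))"
      unfolding Z_def using Eexp SK U_def by (intro sum.cong) auto
    also have "\<dots> = (\<Sum>l\<in>U. \<Sum>j\<in>K. (G u l * M l j) *\<^sub>R Y j)"
      by (simp add: scaleR_sum_right)
    also have "\<dots> = (\<Sum>j\<in>K. c j *\<^sub>R Y j)"
      unfolding c_def by (subst sum.swap) (simp add: scaleR_sum_left)
    also have "\<dots> = (\<Sum>j\<in>K. (if j \<in> B then c j *\<^sub>R Y j else 0) + (if j = u then Y j else 0))"
    proof (intro sum.cong refl)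
      fix j assume j: "j \<in> K"
      show "c j *\<^sub>R Y j = (if j \<in> B then c j *\<^sub>R Y j else 0) + (if j = u then Y j else 0)"
      proof (cases "j \<in> B")
        case True thus ?thesis using u U_def by auto
      next
        case False
        show ?thesis
        proof (cases "j \<in> S")
          case True
          hence "j \<in> U" using False U_def by auto
          hence "c j = (if u = j then 1 else 0)" using G u unfolding c_def U_def by auto
          thus ?thesis using False by auto
        next
          case jS: False
          have "c j = 0" unfolding c_def using band u j False jS U_def by (intro sum.neutral) auto
          thus ?thesis using False jS u U_def by auto
        qed
      qed
    qed
    also have "\<dots> = (\<Sum>j\<in>K. if j \<in> B then c j *\<^sub>R Y j else 0) + Y u"
      using K u SK U_def by (auto simp: sum.distrib)
    finally have "Y u - Z u = - (\<Sum>j\<in>K. if j \<in> B then c j *\<^sub>R Y j else 0)" by simp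
    also have "\<dots> \<in> span (Y ` B)"
      by (intro span_neg span_sum) (auto intro: span_scale span_base span_zero)
    finally show ?thesis .
  qed
  have c2: "inner (Z u) (Y b) = 0" if "u \<in> U" "b \<in> B" for u b
  proof -
    have "inner (Z u) (Y b) = (\<Sum>l\<in>U. G u l * inner (E l) (Y b))"
      unfolding Z_def by (simp add: inner_sum_left)
    also have "\<dots> = 0"
    proof (intro sum.neutral ballI)
      fix l assume l: "l \<in> U"
      have "b \<in> K" "l \<in> K" "b \<noteq> l" using l that SK BK U_def by auto
      hence "inner (Y b) (E l) = 0" using bi by auto
      thus "G u l * inner (E l) (Y b) = 0" by (simp add: inner_commute)
    qed
    finally show ?thesis .
  qed
  define p where "p = a - (\<Sum>u\<in>U. \<alpha> u *\<^sub>R Z u)"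
  have "p = (\<Sum>k\<in>S \<inter> B. \<alpha> k *\<^sub>R Y k) + (\<Sum>k\<in>U. \<alpha> k *\<^sub>R Y k) - (\<Sum>u\<in>U. \<alpha> u *\<^sub>R Z u)"
    unfolding p_def \<alpha> U_def using sum.Int_Diff[OF finS, of _ B] by simp
  also have "\<dots> = (\<Sum>k\<in>S \<inter> B. \<alpha> k *\<^sub>R Y k) + (\<Sum>k\<in>U. \<alpha> k *\<^sub>R (Y k - Z k))"
    by (simp add: sum_subtractf scaleR_diff_right)
  also have "\<dots> \<in> span (Y ` B)"
    by (intro span_add span_sum span_scale c1) (auto intro: span_base)
  finally have p: "p \<in> span (Y ` B)" .
  have orth: "\<forall>s\<in>Y ` B. inner (a - p) s = 0"
    unfolding p_def using c2 by (auto simp: inner_sum_left intro!: sum.neutral)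
  have "hatE a (Y ` B) = p" by (rule hatE_char[OF p orth])
  hence "a - hatE a (Y ` B) = (\<Sum>u\<in>U. \<alpha> u *\<^sub>R Z u)" unfolding p_def by simp
  also have "\<dots> \<in> span (E ` U)" unfolding Z_def
    by (intro span_sum span_scale) (auto intro: span_base)
  finally show ?thesis unfolding U_def .
qed

lemma span_orth:
  fixes E :: "nat \<Rightarrow> 'h::real_inner"
  assumes "finite U" "finite V" "\<forall>u\<in>U. \<forall>v\<in>V. inner (E u) (E v) = 0"
    and "x \<in> span (E ` U)" "y \<in> span (E ` V)"
  shows "inner x y = 0"
proof -
  obtain \<alpha> where a: "x = (\<Sum>k\<in>U. \<alpha> k *\<^sub>R E k)" using span_repr[OF assms(1,4)] by blast
  obtain \<beta> where b: "y = (\<Sum>k\<in>V. \<beta> k *\<^sub>R E k)" using span_repr[OF assms(2,5)] by blast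
  show ?thesis unfolding a b using assms(3)
    by (simp add: inner_sum_left inner_sum_right)
qed

lemma cond_orth_biorth:
  fixes Y E :: "nat \<Rightarrow> 'h::real_inner" and M G1 G2 :: "nat \<Rightarrow> nat \<Rightarrow> real"
  assumes K: "finite K" and SK: "S \<subseteq> K" and TK: "T \<subseteq> K" and BK: "B \<subseteq> K"
    and bi: "\<forall>j\<in>K. \<forall>k\<in>K. inner (Y j) (E k) = (if j = k then 1 else 0)"
    and Eexp: "\<forall>k\<in>K. E k = (\<Sum>l\<in>K. M k l *\<^sub>R Y l)"
    and EE: "\<forall>k\<in>K. \<forall>l\<in>K. inner (E k) (E l) = M k l"
    and band1: "\<forall>u\<in>S-B. \<forall>j\<in>K-(S\<union>B). M u j = 0"
    and band2: "\<forall>u\<in>T-B. \<forall>j\<in>K-(T\<union>B). M u j = 0"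
    and cross: "\<forall>u\<in>S-B. \<forall>v\<in>T-B. M u v = 0"
    and G1: "\<forall>u\<in>S-B. \<forall>j\<in>S-B. (\<Sum>l\<in>S-B. G1 u l * M l j) = (if u = j then 1 else 0)"
    and G2: "\<forall>u\<in>T-B. \<forall>j\<in>T-B. (\<Sum>l\<in>T-B. G2 u l * M l j) = (if u = j then 1 else 0)"
  shows "cond_orth (Y ` S) (Y ` T) (Y ` B)"
  unfolding cond_orth_def
proof (intro ballI)
  fix a b assume a: "a \<in> closure (span (Y ` S))" and b: "b \<in> closure (span (Y ` T))"
  have ra: "a - hatE a (Y ` B) \<in> span (E ` (S - B))"
    by (rule residual_side[OF K SK BK bi Eexp band1 G1 a])
  have rb: "b - hatE b (Y ` B) \<in> span (E ` (T - B))"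
    by (rule residual_side[OF K TK BK bi Eexp band2 G2 b])
  have fS: "finite (S - B)" "finite (T - B)" using K SK TK finite_subset by blast+
  show "inner (a - hatE a (Y ` B)) (b - hatE b (Y ` B)) = 0"
  proof (rule span_orth[OF fS _ ra rb], intro ballI)
    fix u v assume u: "u \<in> S - B" and v: "v \<in> T - B"
    hence "u \<in> K" "v \<in> K" using SK TK by auto
    hence "inner (E u) (E v) = M u v" using EE by blast
    thus "inner (E u) (E v) = 0" using cross u v by simp
  qed
qed



lemma mod_lt2: "(x::nat) < 2 * N \<Longrightarrow> x mod N = (if x < N then x else x - N)"
proof (cases "x < N")
  case False
  assume "x < 2 * N"
  hence "x - N < N" by simp
  moreover have "x = (x - N) + N" using False by simp
  ultimately have "x mod N = x - N"
    by (metis mod_add_self2 mod_less)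
  thus ?thesis using False by simp
qed simp

lemma bnd_mod: "(k::nat) < n \<Longrightarrow> n \<le> N \<Longrightarrow> (t1 + N * n - k) mod N = (t1 + N - k) mod N"
proof -
  assume a: "k < n" "n \<le> N"
  have "t1 + N * n - k = (t1 + N - k) + N * (n - 1)"
    using a by (cases n) (auto simp: algebra_simps)
  thus ?thesis by simp
qed

lemma cyc_sep:
  assumes N: "N > 2 * n" and n: "n \<ge> 1" and t1: "t1 < N" and t2: "t2 < N"
    and t: "t \<in> cyc_interval N t1 t2" and s: "s < N"
    and sI: "s \<notin> cyc_interval N t1 t2" and sB: "s \<notin> cyc_boundary N n t1 t2"
  shows "n < min ((t + N - s) mod N) ((s + N - t) mod N)"
proof -
  define L where "L = (t2 + N - t1) mod N"
  obtain k where k: "0 < k" "k < L" "t = (t1 + k) mod N"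
    using t unfolding cyc_interval_def L_def by auto
  have L: "L = (if t2 + N - t1 < N then t2 + N - t1 else t2 + N - t1 - N)"
    unfolding L_def using t1 t2 by (intro mod_lt2) auto
  have tt: "t = (if t1 + k < N then t1 + k else t1 + k - N)"
    unfolding k(3) using t1 k L t2 by (intro mod_lt2) (auto split: if_splits)
  have tN: "t < N" using k(3) N by simp
  define j where "j = (s + N - t1) mod N"
  have jj: "j = (if s + N - t1 < N then s + N - t1 else s + N - t1 - N)"
    unfolding j_def using t1 s by (intro mod_lt2) auto
  have sj: "s = (t1 + j) mod N"
    by (subst mod_lt2) (use jj s t1 in auto)
  have nI: "\<not> (0 < j \<and> j < L)"
    using sI sj unfolding cyc_interval_def L_def by auto
  have b0: "s \<noteq> (t1 + N - 0) mod N"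
    using sB n unfolding cyc_boundary_def using bnd_mod[of 0 n N t1] N by force
  have jnz: "j \<noteq> 0" using b0 sj by (cases "j = 0") auto
  have bl: "j \<ge> L + n"
  proof (rule ccontr)
    assume c: "\<not> j \<ge> L + n"
    have jL: "L \<le> j" using nI jnz by auto
    have "j - L < n" using c jL by arith
    moreover have "s = (t2 + (j - L)) mod N"
      by (subst mod_lt2, use L jj s t1 t2 c jL in auto)+
    ultimately show False using sB unfolding cyc_boundary_def by auto
  qed
  have br: "j \<le> N - n"
  proof (rule ccontr)
    assume c: "\<not> j \<le> N - n"
    have "N - j < n" using c jj s t1 by (simp split: if_splits; arith)
    moreover have "s = (t1 + N - (N - j)) mod N"
      by (subst mod_lt2, use jj s t1 c in auto)+
    ultimately show False using sB bnd_mod[of "N - j" n N t1] N unfolding cyc_boundary_def by force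
  qed
  have "(s + N - t) mod N = (if s + N - t < N then s + N - t else s + N - t - N)"
    using tN s by (intro mod_lt2) auto
  also have "\<dots> = j - k"
    using jj tt bl br k(1,2) s t1 t2 N tN
    by (cases "t1 + k < N"; cases "s + N - t1 < N"; cases "s + N - t < N"; simp; arith)
  finally have d1: "(s + N - t) mod N = j - k" .
  have "(t + N - s) mod N = (if t + N - s < N then t + N - s else t + N - s - N)"
    using tN s by (intro mod_lt2) auto
  also have "\<dots> = N - (j - k)"
    using jj tt bl br k(1,2) s t1 t2 N tN
    by (cases "t1 + k < N"; cases "s + N - t1 < N"; cases "t + N - s < N"; simp; arith)
  finally have d2: "(t + N - s) mod N = N - (j - k)" .
  have "j < N" unfolding j_def using N by simp
  thus ?thesis unfolding d1 d2 using bl br k(1,2) by arith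
qed



lemma modeq_int: "((x::nat) mod N = y mod N) = (int N dvd int x - int y)"
  by (metis of_nat_eq_iff zmod_int mod_eq_dvd_iff)

lemma mod_dvd_self: "int N dvd int ((x::nat) mod N) - int x"
  using modeq_int[of "x mod N" N x] by simp

lemma shift_diff:
  fixes N i j s :: nat
  assumes "i < N" "j < N"
  shows "((i + s) mod N + N - (j + s) mod N) mod N = (i + N - j) mod N"
proof -
  have B: "(j + s) mod N < N" using assms by simp
  have e0: "int ((i + s) mod N + N - (j + s) mod N) = int ((i + s) mod N) + int N - int ((j + s) mod N)"
    by (subst of_nat_diff) (use B in auto)
  have e1: "int (i + N - j) = int i + int N - int j"
    by (subst of_nat_diff) (use assms in auto)
  have e: "int ((i + s) mod N + N - (j + s) mod N) - int (i + N - j)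
     = (int ((i + s) mod N) - int (i + s)) - (int ((j + s) mod N) - int (j + s))"
    unfolding e0 e1 by simp
  have "int N dvd int ((i + s) mod N + N - (j + s) mod N) - int (i + N - j)"
    unfolding e by (intro dvd_diff mod_dvd_self)
  thus ?thesis using modeq_int by blast
qed

lemma shift_find:
  fixes N i j i' j' :: nat
  assumes "i < N" "j < N" "i' < N" "j' < N" "(i + N - j) mod N = (i' + N - j') mod N"
  shows "(i + (i' + N - i) mod N) mod N = i'" "(j + (i' + N - i) mod N) mod N = j'"
proof -
  define S where "S = (i' + N - i) mod N"
  have d0: "int N dvd int S - int (i' + N - i)" unfolding S_def by (rule mod_dvd_self)
  have d1: "int N dvd int (i + N - j) - int (i' + N - j')" using assms(5) modeq_int by blast
  have e1: "int (i + S) - int i' = (int S - int (i' + N - i)) + int N" using assms by (simp add: of_nat_diff)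
  have "int N dvd int (i + S) - int i'" unfolding e1 by (intro dvd_add d0) simp
  hence "(i + S) mod N = i' mod N" using modeq_int by blast
  thus "(i + (i' + N - i) mod N) mod N = i'" using assms unfolding S_def by simp
  have e2: "int (j + S) - int j' = (int S - int (i' + N - i)) - (int (i + N - j) - int (i' + N - j')) + int N"
    using assms by (simp add: of_nat_diff)
  have "int N dvd int (j + S) - int j'" unfolding e2 by (intro dvd_add dvd_diff d0 d1) simp
  hence "(j + S) mod N = j' mod N" using modeq_int by blast
  thus "(j + (i' + N - i) mod N) mod N = j'" using assms unfolding S_def by simp
qed

lemma add_mod_cancel:
  fixes N a b s :: nat
  assumes "a < N" "b < N" "(a + s) mod N = (b + s) mod N"
  shows "a = b"
proof -
  have "int N dvd int (a + s) - int (b + s)" using assms(3) modeq_int by blast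
  hence "int N dvd int a - int b" by simp
  hence "a mod N = b mod N" using modeq_int by blast
  thus ?thesis using assms by simp
qed

definition sig :: "nat \<Rightarrow> nat \<Rightarrow> nat \<Rightarrow> nat \<Rightarrow> nat" where
  "sig m N s k = ((k div m + s) mod N) * m + k mod m"

lemma sig_props:
  fixes m N s k :: nat
  assumes "0 < m" "k < m * N"
  shows "sig m N s k < m * N" "sig m N s k div m = (k div m + s) mod N" "sig m N s k mod m = k mod m"
proof -
  have N: "0 < N" using assms by (cases N) auto
  have q: "(k div m + s) mod N < N" using N by simp
  have r: "k mod m < m" using assms by simp
  have "((k div m + s) mod N) * m + k mod m < ((k div m + s) mod N) * m + m" using r by simp
  also have "\<dots> = ((k div m + s) mod N + 1) * m" by simp
  also have "\<dots> \<le> N * m" using q by (intro mult_right_mono) auto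
  finally show "sig m N s k < m * N" unfolding sig_def by (simp add: mult.commute)
  show "sig m N s k div m = (k div m + s) mod N" unfolding sig_def using r assms by simp
  show "sig m N s k mod m = k mod m" unfolding sig_def using r by simp
qed

lemma sig_bij:
  fixes m N s :: nat
  assumes "0 < m"
  shows "sig m N s ` {..<m*N} = {..<m*N}" "inj_on (sig m N s) {..<m*N}"
proof -
  show inj: "inj_on (sig m N s) {..<m*N}"
  proof (rule inj_onI)
    fix k l assume k: "k \<in> {..<m*N}" and l: "l \<in> {..<m*N}" and eq: "sig m N s k = sig m N s l"
    have kN: "k div m < N" "l div m < N" using k l assms by (auto simp: less_mult_imp_div_less mult.commute)
    have "(k div m + s) mod N = (l div m + s) mod N" using sig_props[OF assms, of k N s] sig_props[OF assms, of l N s] k l eq by auto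
    hence d: "k div m = l div m" using add_mod_cancel kN by blast
    have "k mod m = l mod m" using sig_props[OF assms, of k N s] sig_props[OF assms, of l N s] k l eq by auto
    thus "k = l" using d by (metis div_mult_mod_eq)
  qed
  show "sig m N s ` {..<m*N} = {..<m*N}"
    by (rule endo_inj_surj) (use inj sig_props(1)[OF assms] in auto)
qed

lemma circ_shift:
  fixes A :: "nat \<Rightarrow> nat \<Rightarrow> real"
  assumes "0 < m" "block_circulant m N A" "k < m * N" "l < m * N"
  shows "A (sig m N s k) (sig m N s l) = A k l"
proof -
  have kN: "k div m < N" "l div m < N" using assms by (auto simp: less_mult_imp_div_less mult.commute)
  have N: "0 < N" using kN by simp
  have "A (((k div m + s) mod N) * m + k mod m) (((l div m + s) mod N) * m + l mod m) = A ((k div m) * m + k mod m) ((l div m) * m + l mod m)"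
  proof -
    have bc: "\<forall>i<N. \<forall>j<N. \<forall>i'<N. \<forall>j'<N. (i + N - j) mod N = (i' + N - j') mod N \<longrightarrow>
        (\<forall>a<m. \<forall>b<m. A (i*m + a) (j*m + b) = A (i'*m + a) (j'*m + b))"
      using assms(2) unfolding block_circulant_def by blast
    have q: "(k div m + s) mod N < N" "(l div m + s) mod N < N" "k mod m < m" "l mod m < m"
      using N assms(1) by auto
    show ?thesis
      using bc[rule_format, OF kN q(1,2) shift_diff[OF kN, of s, symmetric] q(3,4)] by simp
  qed
  thus ?thesis unfolding sig_def by simp
qed

lemma circ_from_shift:
  fixes A :: "nat \<Rightarrow> nat \<Rightarrow> real"
  assumes m: "0 < m" and sh: "\<And>s k l. k < m * N \<Longrightarrow> l < m * N \<Longrightarrow> A (sig m N s k) (sig m N s l) = A k l"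
  shows "block_circulant m N A"
  unfolding block_circulant_def
proof (intro allI impI)
  fix i j i' j' a b
  assume i: "i < N" and j: "j < N" and i': "i' < N" and j': "j' < N"
    and eq: "(i + N - j) mod N = (i' + N - j') mod N" and a: "a < m" and b: "b < m"
  define s where "s = (i' + N - i) mod N"
  have s1: "(i + s) mod N = i'" and s2: "(j + s) mod N = j'"
    using shift_find[OF i j i' j' eq] unfolding s_def by auto
  have ki: "i * m + a < m * N"
  proof -
    have "i * m + a < i * m + m" using a by simp
    also have "\<dots> = (i + 1) * m" by simp
    also have "\<dots> \<le> N * m" using i by (intro mult_right_mono) auto
    finally show ?thesis by (simp add: mult.commute)
  qed
  have kj: "j * m + b < m * N"
  proof -
    have "j * m + b < j * m + m" using b by simp
    also have "\<dots> = (j + 1) * m" by simp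
    also have "\<dots> \<le> N * m" using j by (intro mult_right_mono) auto
    finally show ?thesis by (simp add: mult.commute)
  qed
  have "sig m N s (i * m + a) = i' * m + a" unfolding sig_def using a s1 by simp
  moreover have "sig m N s (j * m + b) = j' * m + b" unfolding sig_def using b s2 by simp
  ultimately show "A (i * m + a) (j * m + b) = A (i' * m + a) (j' * m + b)"
    using sh[OF ki kj, of s] by simp
qed

lemma inverse_unique:
  fixes A B B' :: "nat \<Rightarrow> nat \<Rightarrow> real"
  assumes "inverse_pair d A B"
    and R: "\<forall>k<d. \<forall>l<d. (\<Sum>j<d. A k j * B' j l) = (if k = l then 1 else 0)"
    and "k < d" "l < d"
  shows "B' k l = B k l"
proof -
  have "B' k l = (\<Sum>i<d. if k = i then B' i l else 0)" using assms(3) by simp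
  also have "\<dots> = (\<Sum>i<d. (\<Sum>j<d. B k j * A j i) * B' i l)"
    using assms(1,3) unfolding inverse_pair_def by (intro sum.cong refl) auto
  also have "\<dots> = (\<Sum>j<d. B k j * (\<Sum>i<d. A j i * B' i l))"
    by (simp add: sum_distrib_left sum_distrib_right mult.assoc) (rule sum.swap)
  also have "\<dots> = (\<Sum>j<d. if j = l then B k j else 0)"
    using R assms(4) by (intro sum.cong refl) auto
  also have "\<dots> = B k l" using assms(4) by simp
  finally show ?thesis .
qed




lemma comps_stack:
  fixes x :: "nat \<Rightarrow> nat \<Rightarrow> 'h"
  assumes m: "0 < m" and X: "X \<subseteq> {..<N}"
  shows "comps m x X = stack m x ` {k. k < m * N \<and> k div m \<in> X}"
proof
  show "comps m x X \<subseteq> stack m x ` {k. k < m * N \<and> k div m \<in> X}"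
  proof
    fix z assume "z \<in> comps m x X"
    then obtain t i where ti: "z = x t i" "t \<in> X" "i < m" unfolding comps_def by auto
    have tN: "t < N" using ti X by auto
    have "t * m + i < t * m + m" using ti by simp
    also have "\<dots> = (t + 1) * m" by simp
    also have "\<dots> \<le> N * m" using tN by (intro mult_right_mono) auto
    finally have "t * m + i < m * N" by (simp add: mult.commute)
    moreover have "(t * m + i) div m = t" "(t * m + i) mod m = i" using ti m by auto
    ultimately show "z \<in> stack m x ` {k. k < m * N \<and> k div m \<in> X}"
      using ti unfolding stack_def by (intro image_eqI[of _ _ "t * m + i"]) auto
  qed
next
  show "stack m x ` {k. k < m * N \<and> k div m \<in> X} \<subseteq> comps m x X"
  proof
    fix z assume "z \<in> stack m x ` {k. k < m * N \<and> k div m \<in> X}"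
    then obtain k where k: "k div m \<in> X" "z = x (k div m) (k mod m)" unfolding stack_def by auto
    have "k mod m < m" using m by simp
    thus "z \<in> comps m x X" unfolding comps_def using k by blast
  qed
qed

lemma idx_bound:
  fixes t i m N :: nat
  assumes "t < N" "i < m"
  shows "t * m + i < m * N"
proof -
  have "t * m + i < t * m + m" using assms by simp
  also have "\<dots> = (t + 1) * m" by simp
  also have "\<dots> \<le> N * m" using assms by (intro mult_right_mono) auto
  finally show ?thesis by (simp add: mult.commute)
qed

theorem theorem2:
  fixes m n N :: nat and M :: "nat \<Rightarrow> nat \<Rightarrow> real" and e :: "nat \<Rightarrow> nat \<Rightarrow> 'h::real_inner"
  assumes "m \<ge> 1" and "n \<ge> 1" and "N > 2 * n"
    and "symmetric_mat (m*N) M" and "pos_def_mat (m*N) M"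
    and "block_circulant m N M" and "banded m N n M"
    and "stationary m N e"
    and "\<forall>k<m*N. \<forall>l<m*N. cov m e k l = M k l"
  shows "\<exists>y. solves m N M y e
           \<and> (\<forall>y'. solves m N M y' e \<longrightarrow> (\<forall>t<N. \<forall>i<m. y' t i = y t i))
           \<and> full_rank m N y \<and> stationary m N y \<and> reciprocal m N n y
           \<and> (\<forall>k<m*N. \<forall>l<m*N. cross_cov m y e k l = (if k = l then 1 else 0))
           \<and> normalized_conjugate m N y e"
proof -
  have m0: "0 < m" using assms(1) by simp
  have N0: "0 < N" using assms(3) by simp
  define d where "d = m * N"
  have kdiv: "k div m < N" if "k < d" for k
    using that m0 unfolding d_def by (simp add: less_mult_imp_div_less mult.commute)
  obtain Minv where Mi: "inverse_pair d M Minv" using pd_inverse assms(5) unfolding d_def by blast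
  have Mi1: "(\<Sum>k<d. M i k * Minv k j) = (if i = j then 1 else 0)" if "i < d" "j < d" for i j
    using Mi that unfolding inverse_pair_def by blast
  have Mi2: "(\<Sum>k<d. Minv i k * M k j) = (if i = j then 1 else 0)" if "i < d" "j < d" for i j
    using Mi that unfolding inverse_pair_def by blast
  have Msym: "M k l = M l k" if "k < d" "l < d" for k l
    using assms(4) that unfolding symmetric_mat_def d_def by blast
  define E where "E = stack m e"
  define y where "y = (\<lambda>t i. \<Sum>l<d. Minv (t * m + i) l *\<^sub>R E l)"
  define Y where "Y = stack m y"
  have Yk: "Y k = (\<Sum>l<d. Minv k l *\<^sub>R E l)" for k
    unfolding Y_def y_def stack_def by simp
  have yY: "y t i = Y (t * m + i)" if "i < m" for t i
    unfolding Y_def stack_def using that by simp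
  have eE: "e t i = E (t * m + i)" if "i < m" for t i
    unfolding E_def stack_def using that by simp
  have EE: "inner (E k) (E l) = M k l" if "k < d" "l < d" for k l
    using assms(9) that unfolding cov_def cross_cov_def E_def d_def by simp
  have bi: "inner (Y j) (E k) = (if j = k then 1 else 0)" if "j < d" "k < d" for j k
  proof -
    have "inner (Y j) (E k) = (\<Sum>l<d. Minv j l * M l k)"
      unfolding Yk using EE that by (simp add: inner_sum_left)
    also have "\<dots> = (if j = k then 1 else 0)" using Mi2 that by simp
    finally show ?thesis .
  qed
  have Eexp: "E k = (\<Sum>l<d. M k l *\<^sub>R Y l)" if "k < d" for k
  proof -
    have "(\<Sum>l<d. M k l *\<^sub>R Y l) = (\<Sum>l<d. \<Sum>j<d. (M k l * Minv l j) *\<^sub>R E j)"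
      unfolding Yk by (simp add: scaleR_sum_right)
    also have "\<dots> = (\<Sum>j<d. (\<Sum>l<d. M k l * Minv l j) *\<^sub>R E j)"
      by (subst sum.swap) (simp add: scaleR_sum_left)
    also have "\<dots> = (\<Sum>j<d. if k = j then E j else 0)"
      using Mi1 that by (intro sum.cong refl) auto
    also have "\<dots> = E k" using that by simp
    finally show ?thesis by simp
  qed
  have solves: "solves m N M y e"
    unfolding solves_def using Eexp unfolding d_def E_def Y_def by simp
  have uniq: "\<forall>y'. solves m N M y' e \<longrightarrow> (\<forall>t<N. \<forall>i<m. y' t i = y t i)"
  proof (intro allI impI)
    fix y' t i assume s: "solves m N M y' e" and t: "t < N" and i: "i < m"
    define Y' where "Y' = stack m y'"
    have s': "(\<Sum>l<d. M k l *\<^sub>R Y' l) = E k" if "k < d" for k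
      using s that unfolding solves_def d_def Y'_def E_def by simp
    define j where "j = t * m + i"
    have j: "j < d" unfolding j_def d_def using idx_bound[OF t i] .
    have "Y j = (\<Sum>k<d. Minv j k *\<^sub>R (\<Sum>l<d. M k l *\<^sub>R Y' l))"
      unfolding Yk using s' by (intro sum.cong refl) auto
    also have "\<dots> = (\<Sum>l<d. (\<Sum>k<d. Minv j k * M k l) *\<^sub>R Y' l)"
      by (simp add: scaleR_sum_right scaleR_sum_left) (rule sum.swap)
    also have "\<dots> = (\<Sum>l<d. if j = l then Y' l else 0)"
      using Mi2 j by (intro sum.cong refl) auto
    also have "\<dots> = Y' j" using j by simp
    finally have "Y' j = Y j" by simp
    thus "y' t i = y t i" unfolding Y'_def Y_def stack_def j_def using i by simp
  qed
  have covY: "cov m y k l = Minv l k" if "k < d" "l < d" for k l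
  proof -
    have "cov m y k l = inner (Y k) (Y l)" unfolding cov_def cross_cov_def Y_def ..
    also have "\<dots> = (\<Sum>j<d. Minv l j * inner (Y k) (E j))"
      by (subst (2) Yk) (simp add: inner_sum_right)
    also have "\<dots> = (\<Sum>j<d. if k = j then Minv l j else 0)"
      using bi that by (intro sum.cong refl) auto
    also have "\<dots> = Minv l k" using that by simp
    finally show ?thesis .
  qed
  have covsym: "cov m y k l = cov m y l k" for k l
    unfolding cov_def cross_cov_def by (simp add: inner_commute)
  have covM: "cov m y k l = Minv k l" if "k < d" "l < d" for k l
    using covY[OF that(2,1)] covsym by simp
  have cross: "\<forall>k<m*N. \<forall>l<m*N. cross_cov m y e k l = (if k = l then 1 else 0)"
    using bi unfolding cross_cov_def d_def Y_def E_def by simp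
  have full: "full_rank m N y"
    unfolding full_rank_def pos_def_mat_def
  proof (intro allI impI)
    fix x :: "nat \<Rightarrow> real" assume "\<exists>k<m * N. x k \<noteq> 0"
    then obtain k0 where k0: "k0 < d" "x k0 \<noteq> 0" unfolding d_def by blast
    define v where "v = (\<Sum>k<d. x k *\<^sub>R Y k)"
    have "inner v (E k0) = (\<Sum>k<d. x k * inner (Y k) (E k0))"
      unfolding v_def by (simp add: inner_sum_left)
    also have "\<dots> = (\<Sum>k<d. if k = k0 then x k else 0)"
      using bi k0 by (intro sum.cong refl) auto
    also have "\<dots> = x k0" using k0 by simp
    finally have "v \<noteq> 0" using k0 by auto
    hence "inner v v > 0" by simp
    also have "inner v v = (\<Sum>k<d. \<Sum>l<d. x k * cov m y k l * x l)"
      unfolding v_def cov_def cross_cov_def Y_def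
      by (simp add: inner_sum_left inner_sum_right sum_distrib_left inner_commute mult_ac)
    finally show "(\<Sum>k<m * N. \<Sum>l<m * N. x k * cov m y k l * x l) > 0" unfolding d_def .
  qed
  have Mshift: "M (sig m N s k) (sig m N s l) = M k l" if "k < d" "l < d" for s k l
    using circ_shift[OF m0 assms(6)] that unfolding d_def by blast
  have Minvshift: "Minv (sig m N s k) (sig m N s l) = Minv k l" if "k < d" "l < d" for s k l
  proof -
    have bij: "sig m N s ` {..<d} = {..<d}" "inj_on (sig m N s) {..<d}"
      using sig_bij[OF m0] unfolding d_def by auto
    have sd: "sig m N s k < d" if "k < d" for k using sig_props(1)[OF m0] that unfolding d_def by blast
    have R: "\<forall>k<d. \<forall>l<d. (\<Sum>j<d. M k j * Minv (sig m N s j) (sig m N s l)) = (if k = l then 1 else 0)"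
    proof (intro allI impI)
      fix k l assume k: "k < d" and l: "l < d"
      have "(\<Sum>j<d. M k j * Minv (sig m N s j) (sig m N s l))
          = (\<Sum>j<d. M (sig m N s k) (sig m N s j) * Minv (sig m N s j) (sig m N s l))"
        using Mshift k by (intro sum.cong refl) auto
      also have "\<dots> = (\<Sum>j\<in>sig m N s ` {..<d}. M (sig m N s k) j * Minv j (sig m N s l))"
        by (subst sum.reindex[OF bij(2)]) simp
      also have "\<dots> = (if sig m N s k = sig m N s l then 1 else 0)"
        unfolding bij(1) using Mi1 sd k l by simp
      also have "\<dots> = (if k = l then 1 else 0)"
        using bij(2) k l unfolding inj_on_def by auto
      finally show "(\<Sum>j<d. M k j * Minv (sig m N s j) (sig m N s l)) = (if k = l then 1 else 0)" .
    qed
    show ?thesis using inverse_unique[OF Mi R that] by simp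
  qed
  have stat: "stationary m N y"
    unfolding stationary_def
  proof
    show "symmetric_mat (m * N) (cov m y)" unfolding symmetric_mat_def using covsym by blast
    show "block_circulant m N (cov m y)"
    proof (rule circ_from_shift[OF m0])
      fix s k l assume k: "k < m * N" and l: "l < m * N"
      have sd: "sig m N s k < d" "sig m N s l < d" using sig_props(1)[OF m0] k l unfolding d_def by blast+
      show "cov m y (sig m N s k) (sig m N s l) = cov m y k l"
        using covM[OF sd] covM k l Minvshift unfolding d_def by simp
    qed
  qed
    have recip: "reciprocal m N n y"
    unfolding reciprocal_def
  proof (intro allI impI)
    fix t1 t2 assume t1: "t1 < N" and t2: "t2 < N"
    define I where "I = cyc_interval N t1 t2"
    define Bd where "Bd = cyc_boundary N n t1 t2"
    have IN: "I \<subseteq> {..<N}" unfolding I_def cyc_interval_def using N0 by auto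
    have BN: "Bd \<subseteq> {..<N}" unfolding Bd_def cyc_boundary_def using N0 by auto
    define K where "K = {..<d}"
    define S where "S = {k. k < m * N \<and> k div m \<in> I}"
    define T where "T = {k. k < m * N \<and> k div m \<in> {..<N} - I}"
    define B where "B = {k. k < m * N \<and> k div m \<in> Bd}"
    have cS: "comps m y I = Y ` S" unfolding S_def Y_def by (rule comps_stack[OF m0 IN])
    have cT: "comps m y ({..<N} - I) = Y ` T" unfolding T_def Y_def by (rule comps_stack[OF m0]) auto
    have cB: "comps m y Bd = Y ` B" unfolding B_def Y_def by (rule comps_stack[OF m0 BN])
    have SK: "S \<subseteq> K" and TK: "T \<subseteq> K" and BK: "B \<subseteq> K"
      unfolding S_def T_def B_def K_def d_def by auto
    have finK: "finite K" unfolding K_def by simp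
    have band1: "\<forall>u\<in>S-B. \<forall>j\<in>K-(S\<union>B). M u j = 0"
    proof (intro ballI)
      fix u j assume u: "u \<in> S - B" and j: "j \<in> K - (S \<union> B)"
      have ud: "u < d" and jd: "j < d" using u j SK unfolding K_def by auto
      have tu: "u div m \<in> cyc_interval N t1 t2" using u unfolding S_def I_def by auto
      have sj: "j div m \<notin> cyc_interval N t1 t2" "j div m \<notin> cyc_boundary N n t1 t2"
        using j jd unfolding S_def B_def I_def Bd_def d_def by auto
      have sep: "n < min ((u div m + N - j div m) mod N) ((j div m + N - u div m) mod N)"
        by (rule cyc_sep[OF assms(3) assms(2) t1 t2 tu kdiv[OF jd] sj])
      have bd: "\<forall>i<N. \<forall>j<N. min ((i + N - j) mod N) ((j + N - i) mod N) > n \<longrightarrow>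
        (\<forall>a<m. \<forall>b<m. M (i*m + a) (j*m + b) = 0)"
        using assms(7) unfolding banded_def by blast
      have "\<forall>a<m. \<forall>b<m. M ((u div m) * m + a) ((j div m) * m + b) = 0"
        using bd kdiv[OF ud] kdiv[OF jd] sep by blast
      hence "M ((u div m) * m + u mod m) ((j div m) * m + j mod m) = 0"
        using m0 by (meson mod_less_divisor)
      thus "M u j = 0" by (metis div_mult_mod_eq)
    qed
    have Tc: "T = K - S" unfolding T_def S_def K_def d_def using kdiv unfolding d_def by auto
    have band2: "\<forall>u\<in>T-B. \<forall>j\<in>K-(T\<union>B). M u j = 0"
    proof (intro ballI)
      fix u j assume u: "u \<in> T - B" and j: "j \<in> K - (T \<union> B)"
      have "j \<in> S - B" "u \<in> K - (S \<union> B)" using u j Tc by auto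
      hence "M j u = 0" using band1 by blast
      moreover have "u < d" "j < d" using u j TK unfolding K_def by auto
      ultimately show "M u j = 0" using Msym by metis
    qed
    have crossM: "\<forall>u\<in>S-B. \<forall>v\<in>T-B. M u v = 0"
      using band1 Tc by blast
    have pdU: "\<exists>G. \<forall>u\<in>U. \<forall>j\<in>U. (\<Sum>l\<in>U. G u l * M l j) = (if u = j then 1 else 0)"
      if "U \<subseteq> K" for U
    proof -
      have fU: "finite U" using that finK finite_subset by blast
      have "U \<subseteq> {..<m*N}" using that unfolding K_def d_def .
      from pd_inverse_on[OF fU pd_restrict[OF assms(5) this]] show ?thesis by blast
    qed
    obtain G1 where G1: "\<forall>u\<in>S-B. \<forall>j\<in>S-B. (\<Sum>l\<in>S-B. G1 u l * M l j) = (if u = j then 1 else 0)"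
      using pdU[of "S - B"] SK by blast
    obtain G2 where G2: "\<forall>u\<in>T-B. \<forall>j\<in>T-B. (\<Sum>l\<in>T-B. G2 u l * M l j) = (if u = j then 1 else 0)"
      using pdU[of "T - B"] TK by blast
    have biK: "\<forall>j\<in>K. \<forall>k\<in>K. inner (Y j) (E k) = (if j = k then 1 else 0)"
      using bi unfolding K_def by auto
    have EexpK: "\<forall>k\<in>K. E k = (\<Sum>l\<in>K. M k l *\<^sub>R Y l)"
      using Eexp unfolding K_def by auto
    have EEK: "\<forall>k\<in>K. \<forall>l\<in>K. inner (E k) (E l) = M k l"
      using EE unfolding K_def by auto
    have "cond_orth (Y ` S) (Y ` T) (Y ` B)"
      by (rule cond_orth_biorth[OF finK SK TK BK biK EexpK EEK band1 band2 crossM G1 G2])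
    thus "cond_orth (comps m y (cyc_interval N t1 t2)) (comps m y ({..<N} - cyc_interval N t1 t2))
                    (comps m y (cyc_boundary N n t1 t2))"
      using cS cT cB unfolding I_def Bd_def by simp
  qed
  have md: "m \<le> d" unfolding d_def using N0 by simp
  obtain Delta where Dl: "\<forall>i\<in>{..<m}. \<forall>j\<in>{..<m}. (\<Sum>k\<in>{..<m}. M i k * Delta k j) = (if i = j then 1 else 0)
                          \<and> (\<Sum>k\<in>{..<m}. Delta i k * M k j) = (if i = j then 1 else 0)"
    using pd_inverse_on[OF _ pd_restrict[OF assms(5)], of "{..<m}"] md unfolding d_def by auto
  have D1: "(\<Sum>k<m. M i k * Delta k j) = (if i = j then 1 else 0)" if "i < m" "j < m" for i j
    using Dl that by auto
  have D2: "(\<Sum>k<m. Delta i k * M k j) = (if i = j then 1 else 0)" if "i < m" "j < m" for i j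
    using Dl that by auto
  have Dt: "M (t * m + i) (t * m + j) = M i j" if "t < N" "i < m" "j < m" for t i j
  proof -
    have "(t + N - t) mod N = (0 + N - 0) mod N" by simp
    hence "\<forall>a<m. \<forall>b<m. M (t*m + a) (t*m + b) = M (0*m + a) (0*m + b)"
      using assms(6) that N0 unfolding block_circulant_def by blast
    thus ?thesis using that by simp
  qed
  have ncj: "normalized_conjugate m N y e"
    unfolding normalized_conjugate_def
  proof (intro exI conjI allI impI)
    show "inverse_pair m Delta M" unfolding inverse_pair_def using D1 D2 by auto
  next
    fix t assume t: "t < N"
    define w where "w = (\<lambda>i. \<Sum>a<m. Delta i a *\<^sub>R e t a)"
    have tmd: "t * m + a < d" if "a < m" for a unfolding d_def using idx_bound[OF t that] .
    have cw: "conj_d m N y t i = w i" if i: "i < m" for i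
    proof -
      define Oi where "Oi = {k. k < m * N \<and> k div m \<in> {..<N} - {t}}"
      have cO: "comps m y ({..<N} - {t}) = Y ` Oi" unfolding Oi_def Y_def by (rule comps_stack[OF m0]) auto
      define c where "c = (\<lambda>l. \<Sum>a<m. Delta i a * M (t * m + a) l)"
      have "w i = (\<Sum>a<m. Delta i a *\<^sub>R (\<Sum>l<d. M (t * m + a) l *\<^sub>R Y l))"
        unfolding w_def using eE Eexp tmd by (intro sum.cong refl) auto
      also have "\<dots> = (\<Sum>l<d. c l *\<^sub>R Y l)"
        unfolding c_def by (simp add: scaleR_sum_right scaleR_sum_left) (rule sum.swap)
      also have "\<dots> = (\<Sum>l<d. (if l = t * m + i then Y l else 0) + (if l div m \<noteq> t then c l *\<^sub>R Y l else 0))"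
      proof (intro sum.cong refl)
        fix l assume l: "l \<in> {..<d}"
        show "c l *\<^sub>R Y l = (if l = t * m + i then Y l else 0) + (if l div m \<noteq> t then c l *\<^sub>R Y l else 0)"
        proof (cases "l div m = t")
          case True
          have lb: "l = t * m + l mod m" using True by (metis div_mult_mod_eq)
          have lm: "l mod m < m" using m0 by simp
          have "c l = (\<Sum>a<m. Delta i a * M a (l mod m))"
            unfolding c_def by (subst lb, intro sum.cong refl) (use Dt t lm in auto)
          also have "\<dots> = (if i = l mod m then 1 else 0)" using D2 i lm by simp
          finally have "c l = (if i = l mod m then 1 else 0)" .
          moreover have "(l = t * m + i) = (i = l mod m)" using lb i by auto
          ultimately show ?thesis using True by auto
        next
          case False
          have "l \<noteq> t * m + i" using False i by auto
          thus ?thesis using False by simp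
        qed
      qed
      also have "\<dots> = Y (t * m + i) + (\<Sum>l<d. if l div m \<noteq> t then c l *\<^sub>R Y l else 0)"
        using tmd[OF i] by (simp add: sum.distrib)
      finally have wi: "w i = Y (t * m + i) + (\<Sum>l<d. if l div m \<noteq> t then c l *\<^sub>R Y l else 0)" .
      define p where "p = Y (t * m + i) - w i"
      have p: "p \<in> span (Y ` Oi)"
      proof -
        have "p = - (\<Sum>l<d. if l div m \<noteq> t then c l *\<^sub>R Y l else 0)" unfolding p_def wi by simp
        also have "\<dots> \<in> span (Y ` Oi)"
        proof (intro span_neg span_sum)
          fix l assume l: "l \<in> {..<d}"
          show "(if l div m \<noteq> t then c l *\<^sub>R Y l else 0) \<in> span (Y ` Oi)"
          proof (cases "l div m \<noteq> t")
            case True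
            hence "l \<in> Oi" unfolding Oi_def using l kdiv unfolding d_def by auto
            thus ?thesis using True by (auto intro: span_scale span_base)
          qed (simp add: span_zero)
        qed
        finally show ?thesis .
      qed
      have orth: "\<forall>z\<in>Y ` Oi. inner (Y (t * m + i) - p) z = 0"
      proof
        fix z assume "z \<in> Y ` Oi"
        then obtain k where k: "k \<in> Oi" "z = Y k" by auto
        have kd: "k < d" and kt: "k div m \<noteq> t" using k unfolding Oi_def d_def by auto
        have "inner (Y (t * m + i) - p) z = (\<Sum>a<m. Delta i a * inner (E (t * m + a)) (Y k))"
          unfolding p_def w_def k(2) using eE by (simp add: inner_sum_left)
        also have "\<dots> = 0"
        proof (intro sum.neutral ballI)
          fix a assume a: "a \<in> {..<m}"
          have "k \<noteq> t * m + a" using kt a by auto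
          hence "inner (Y k) (E (t * m + a)) = 0" using bi kd tmd a by auto
          thus "Delta i a * inner (E (t * m + a)) (Y k) = 0" by (simp add: inner_commute)
        qed
        finally show "inner (Y (t * m + i) - p) z = 0" .
      qed
      have "hatE (y t i) (comps m y ({..<N} - {t})) = p"
        unfolding cO yY[OF i] by (rule hatE_char[OF p orth])
      thus ?thesis unfolding conj_d_def p_def yY[OF i] by simp
    qed
    show "Delta i j = inner (conj_d m N y t i) (conj_d m N y t j)" if i: "i < m" and j: "j < m" for i j
    proof -
      have "inner (conj_d m N y t i) (conj_d m N y t j) = inner (w j) (w i)" using cw i j by (simp add: inner_commute)
      also have "\<dots> = (\<Sum>b<m. Delta i b * (\<Sum>a<m. Delta j a * inner (e t a) (e t b)))"
        unfolding w_def inner_sum_left inner_sum_right inner_scaleR_left inner_scaleR_right ..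
      also have "\<dots> = (\<Sum>b<m. Delta i b * (\<Sum>a<m. Delta j a * M a b))"
      proof -
        have IM: "inner (e t a) (e t b) = M a b" if "a < m" "b < m" for a b
        proof -
          have "inner (e t a) (e t b) = M (t * m + a) (t * m + b)"
            using eE EE tmd that by simp
          also have "\<dots> = M a b" using Dt t that by simp
          finally show ?thesis .
        qed
        show ?thesis by (intro sum.cong refl) (simp add: IM)
      qed
      also have "\<dots> = (\<Sum>b<m. if j = b then Delta i b else 0)"
        using D2 j by (intro sum.cong refl) auto
      also have "\<dots> = Delta i j" using j by simp
      finally show ?thesis by simp
    qed
    show "e t i = (\<Sum>j<m. M i j *\<^sub>R conj_d m N y t j)" if i: "i < m" for i
    proof -
      have "(\<Sum>j<m. M i j *\<^sub>R conj_d m N y t j) = (\<Sum>j<m. M i j *\<^sub>R w j)" using cw by simp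
      also have "\<dots> = (\<Sum>a<m. (\<Sum>j<m. M i j * Delta j a) *\<^sub>R e t a)"
        unfolding w_def by (simp add: scaleR_sum_right scaleR_sum_left) (rule sum.swap)
      also have "\<dots> = (\<Sum>a<m. if i = a then e t a else 0)"
        using D1 i by (intro sum.cong refl) auto
      also have "\<dots> = e t i" using i by simp
      finally show ?thesis by simp
    qed
  qed
  show ?thesis using solves uniq full stat recip cross ncj by blast
qed


end
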